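(* For every $n$ and every $k\in[1,\lfloor\frac{n-1}{2}\rfloor]$ there exist Latin squares of order $n$ with inner distance $k$. Moreover, for any Latin square $L$ of order $n$ with inner distance $k$, $L$ is isotopic to Latin squares of every inner distance less than $k$, and these can be obtained from $L$ by symbol permutation alone.
   Context: A Latin square of order $n$ is an $n\times n$ matrix with entries from the symbol set $[1,n]=\{1,\dots,n\}$ in which every row and every column contains each symbol exactly once. The distance between symbols $a,b\in[1,n]$ is $\mathrm{dist}(a,b)=\min\{(a-b)\bmod n,\ (b-a)\bmod n\}$, with remainders taken in $[0,n-1]$. Two cells are adjacent if they share an edge horizontally or vertically. The inner distance of a Latin square is the minimum of $\mathrm{dist}$ over all pairs of symbols in adjacent cells. The maximum inner distance of a Latin square of order $n$ is $\lfloor\frac{n-1}{2}\rfloor$. A symbol permutation of a Latin square $L$ by a bijection $\sigma$ of $[1,n]$ is the Latin square whose $(i,j)$ entry is $\sigma(m_{i,j})$, where $m_{i,j}$ is the $(i,j)$ entry of $L$. Two Latin squares are isotopic if they differ by some combination of symbol permutation, row permutations, and column permutations. (Proof idea: repeatedly apply transpositions of symbols $(n,1)$ after a cyclic shift of symbols, each of which lowers the inner distance by exactly 1.) *)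

theory Defs
  imports Main
begin

definition latin_square :: "nat \<Rightarrow> (nat \<Rightarrow> nat \<Rightarrow> nat) \<Rightarrow> bool" where
  "latin_square n L \<longleftrightarrow>
     (\<forall>i<n. bij_betw (\<lambda>j. L i j) {0..<n} {1..n}) \<and>
     (\<forall>j<n. bij_betw (\<lambda>i. L i j) {0..<n} {1..n})"

definition sym_dist :: "nat \<Rightarrow> nat \<Rightarrow> nat \<Rightarrow> nat" where
  "sym_dist n a b = min (nat ((int a - int b) mod int n)) (nat ((int b - int a) mod int n))"

definition adjacent_pairs :: "nat \<Rightarrow> ((nat \<times> nat) \<times> (nat \<times> nat)) set" where
  "adjacent_pairs n =
     {((i, j), (i, j + 1)) | i j. i < n \<and> j + 1 < n} \<union>
     {((i, j), (i + 1, j)) | i j. i + 1 < n \<and> j < n}"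

definition inner_distance :: "nat \<Rightarrow> (nat \<Rightarrow> nat \<Rightarrow> nat) \<Rightarrow> nat" where
  "inner_distance n L =
     Min ((\<lambda>((i, j), (i', j')). sym_dist n (L i j) (L i' j')) ` adjacent_pairs n)"

definition isotopic :: "nat \<Rightarrow> (nat \<Rightarrow> nat \<Rightarrow> nat) \<Rightarrow> (nat \<Rightarrow> nat \<Rightarrow> nat) \<Rightarrow> bool" where
  "isotopic n L L' \<longleftrightarrow>
     (\<exists>\<sigma> \<alpha> \<beta>. bij_betw \<sigma> {1..n} {1..n} \<and> bij_betw \<alpha> {0..<n} {0..<n} \<and>
        bij_betw \<beta> {0..<n} {0..<n} \<and>
        (\<forall>i<n. \<forall>j<n. L' i j = \<sigma> (L (\<alpha> i) (\<beta> j))))"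

end

theory Submission
  imports Defs
begin


definition sd :: "nat \<Rightarrow> int \<Rightarrow> int" where
  "sd n x = min (x mod int n) (int n - x mod int n)"

lemma sym_dist_sd: "n > 0 \<Longrightarrow> sym_dist n a b = nat (sd n (int a - int b))"
proof -
  assume n: "n > 0"
  have "(int b - int a) mod int n = (- (int a - int b)) mod int n" by simp
  also have "\<dots> = (if (int a - int b) mod int n = 0 then 0 else int n - (int a - int b) mod int n)"
    by (rule zmod_zminus1_eq_if)
  finally show ?thesis unfolding sym_dist_def sd_def using n
    by (auto simp: min_def)
qed

lemma sym_dist_commute: "sym_dist n a b = sym_dist n b a"
  unfolding sym_dist_def by (simp add: min.commute)

lemma sd_mod: "x mod int n = y mod int n \<Longrightarrow> sd n x = sd n y"
  unfolding sd_def by simp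

lemma sd_neg: "sd n (- x) = sd n x"
  unfolding sd_def by (simp add: zmod_zminus1_eq_if min.commute)

lemma sd_nonneg: "n > 0 \<Longrightarrow> sd n x \<ge> 0"
proof -
  assume "n > 0"
  then have "int n > 0" by simp
  then have "0 \<le> x mod int n" "x mod int n < int n" by auto
  then show ?thesis unfolding sd_def by simp
qed

lemma sd_le: "n > 0 \<Longrightarrow> 2 * sd n x \<le> int n"
  unfolding sd_def by (simp add: min_def)

lemma sd_succ: assumes "n > 0" shows "sd n x \<le> sd n (x + 1) + 1"
proof -
  define r where "r = x mod int n"
  have r: "0 \<le> r" "r < int n" using assms unfolding r_def by auto
  have "(x + 1) mod int n = (r + 1) mod int n" unfolding r_def by (simp add: mod_add_left_eq)
  moreover have "(r + 1) mod int n = (if r + 1 = int n then 0 else r + 1)"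
    using r by auto
  ultimately show ?thesis unfolding sd_def r_def[symmetric] using r by auto
qed

lemma sd_pred: assumes "n > 0" shows "sd n x \<le> sd n (x - 1) + 1"
  using sd_succ[OF assms, of "-x"] by (simp add: sd_neg[of n "x - 1", symmetric] sd_neg)

lemma sd_shift: assumes "n > 0" "e \<in> {-1,0,1}" shows "sd n x \<le> sd n (x + e) + 1"
  using assms sd_succ[of n x] sd_pred[of n x] sd_nonneg[of n x] by auto


lemma mod_inj_1n:
  assumes "x \<in> {1..n}" "y \<in> {1..n}" "int x mod int n = int y mod int n"
  shows "x = y"
proof -
  have mx: "int x mod int n = (if x = n then 0 else int x)" using assms(1) by auto
  have my: "int y mod int n = (if y = n then 0 else int y)" using assms(2) by auto
  show ?thesis using assms mx my by (auto split: if_splits)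
qed

lemma bij_endo: "inj_on f {1..n::nat} \<Longrightarrow> (\<And>x. x \<in> {1..n} \<Longrightarrow> f x \<in> {1..n}) \<Longrightarrow> bij_betw f {1..n} {1..n}"
proof -
  assume i: "inj_on f {1..n::nat}" and m: "(\<And>x. x \<in> {1..n} \<Longrightarrow> f x \<in> {1..n})"
  have "f ` {1..n} \<subseteq> {1..n}" using m by blast
  then have "f ` {1..n} = {1..n}" using endo_inj_surj[of "{1..n}" f] i by blast
  then show ?thesis unfolding bij_betw_def using i by blast
qed

lemma shift_props:
  fixes n a :: nat and s :: "nat \<Rightarrow> nat"
  assumes n: "n > 0" and a: "a \<in> {1..n}"
    and s_def: "s = (\<lambda>x. nat ((int x - int a - 1) mod int n) + 1)"
  shows "bij_betw s {1..n} {1..n}"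
    and "\<And>x y. (int (s x) - int (s y)) mod int n = (int x - int y) mod int n"
    and "s a = n"
    and "\<And>b k. (int b - int a) mod int n = int k \<Longrightarrow> 1 \<le> k \<Longrightarrow> s b = k"
proof -
  have ints: "\<And>x. int (s x) = (int x - int a - 1) mod int n + 1"
    unfolding s_def using n by simp
  show d: "\<And>x y. (int (s x) - int (s y)) mod int n = (int x - int y) mod int n"
  proof -
    fix x y
    have "(int (s x) - int (s y)) mod int n = ((int x - int a - 1) mod int n - (int y - int a - 1) mod int n) mod int n"
      by (simp add: ints)
    also have "\<dots> = ((int x - int a - 1) - (int y - int a - 1)) mod int n" by (rule mod_diff_eq)
    finally show "(int (s x) - int (s y)) mod int n = (int x - int y) mod int n" by simp
  qed
  show "bij_betw s {1..n} {1..n}"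
  proof (rule bij_endo)
    show "inj_on s {1..n}"
    proof (rule inj_onI)
      fix x y assume x: "x \<in> {1..n}" and y: "y \<in> {1..n}" and e: "s x = s y"
      have "(int x - int y) mod int n = 0" using d[of x y] e by simp
      then have "int x mod int n = int y mod int n" by (simp add: mod_eq_dvd_iff dvd_eq_mod_eq_0)
      then show "x = y" using mod_inj_1n x y by blast
    qed
    fix x assume "x \<in> {1..n}"
    have "(int x - int a - 1) mod int n < int n" "0 \<le> (int x - int a - 1) mod int n" using n by simp_all
    then have "nat ((int x - int a - 1) mod int n) < n" by linarith
    then show "s x \<in> {1..n}" unfolding s_def by auto
  qed
  show "s a = n" unfolding s_def using n by (simp add: zmod_minus1 nat_diff_distrib)
  fix b k assume bk: "(int b - int a) mod int n = int k" "1 \<le> k"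
  have kn: "int k < int n" using bk(1) n pos_mod_bound[of "int n" "int b - int a"] by simp
  have "(int b - int a - 1) mod int n = ((int b - int a) mod int n - 1) mod int n"
    by (simp add: mod_diff_left_eq)
  also have "\<dots> = int k - 1" using bk kn by simp
  finally show "s b = k" unfolding s_def using bk by simp
qed


definition tau :: "nat \<Rightarrow> nat \<Rightarrow> nat" where
  "tau n x = (if x = 1 then n else if x = n then 1 else x)"

lemma sym_dist_1n: "n \<ge> 2 \<Longrightarrow> sym_dist n 1 n = 1"
proof -
  assume n: "n \<ge> 2"
  have "(1 - int n) mod int n = 1 mod int n" by (simp add: mod_diff_right_eq[symmetric])
  then have "(1 - int n) mod int n = 1" using n by simp
  then show ?thesis using n by (simp add: sym_dist_sd sd_def)
qed

lemma tau_props: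
  assumes n: "n \<ge> 2"
  shows "bij_betw (tau n) {1..n} {1..n}"
    and "\<And>u v. u \<in> {1..n} \<Longrightarrow> v \<in> {1..n} \<Longrightarrow> sym_dist n u v \<ge> 2 \<Longrightarrow>
            sym_dist n u v \<le> sym_dist n (tau n u) (tau n v) + 1"
proof -
  show "bij_betw (tau n) {1..n} {1..n}"
  proof (rule bij_endo)
    show "inj_on (tau n) {1..n}" 
      unfolding inj_on_def tau_def using n by auto
  qed (auto simp: tau_def)
  fix u v assume u: "u \<in> {1..n}" and v: "v \<in> {1..n}" and d: "sym_dist n u v \<ge> 2"
  define e :: "nat \<Rightarrow> int" where "e x = (if x = 1 then -1 else if x = n then 1 else 0)" for x
  have te: "int (tau n x) mod int n = (int x + e x) mod int n" for x
  proof (cases "x = 1")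
    case True then show ?thesis using n by (simp add: tau_def e_def)
  next
    case False
    show ?thesis
    proof (cases "x = n")
      case True then show ?thesis using n False by (simp add: tau_def e_def)
    next
      case F2: False then show ?thesis using False by (simp add: tau_def e_def)
    qed
  qed
  have uv: "\<not> (u \<in> {1,n} \<and> v \<in> {1,n})"
  proof
    assume h: "u \<in> {1,n} \<and> v \<in> {1,n}"
    show False
    proof (cases "u = v")
      case True then show False using d by (simp add: sym_dist_def)
    next
      case False then show False using h d n sym_dist_1n[OF n] sym_dist_commute[of n 1 n] by auto
    qed
  qed
  then have ee: "e u - e v \<in> {-1,0,1}" unfolding e_def by auto
  have "(int (tau n u) - int (tau n v)) mod int n = (int (tau n u) mod int n - int (tau n v) mod int n) mod int n"
    by (simp add: mod_diff_eq)
  also have "\<dots> = ((int u + e u) mod int n - (int v + e v) mod int n) mod int n"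
    by (simp only: te)
  also have "\<dots> = ((int u - int v) + (e u - e v)) mod int n" by (simp add: mod_diff_eq algebra_simps)
  finally have m: "(int (tau n u) - int (tau n v)) mod int n = ((int u - int v) + (e u - e v)) mod int n" .
  have "sd n (int u - int v) \<le> sd n ((int u - int v) + (e u - e v)) + 1"
    using sd_shift[OF _ ee] n by simp
  also have "sd n ((int u - int v) + (e u - e v)) = sd n (int (tau n u) - int (tau n v))"
    using sd_mod[OF m] by simp
  finally show "sym_dist n u v \<le> sym_dist n (tau n u) (tau n v) + 1"
    using n sd_nonneg[of n] by (simp add: sym_dist_sd)
qed



lemma adj_finite: "finite (adjacent_pairs n)"
proof -
  have "adjacent_pairs n \<subseteq> ({..<n} \<times> {..<n}) \<times> ({..<n} \<times> {..<n})"
    unfolding adjacent_pairs_def by auto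
  then show ?thesis by (rule finite_subset) auto
qed

lemma adj_mem: "p \<in> adjacent_pairs n \<Longrightarrow> \<exists>i j i' j'. p = ((i,j),(i',j')) \<and> i<n \<and> j<n \<and> i'<n \<and> j'<n"
  unfolding adjacent_pairs_def by auto

lemma adj_ne: "n \<ge> 2 \<Longrightarrow> ((0,0),(0,1)) \<in> adjacent_pairs n"
  unfolding adjacent_pairs_def by auto

lemma latin_val: "latin_square n L \<Longrightarrow> i<n \<Longrightarrow> j<n \<Longrightarrow> L i j \<in> {1..n}"
  unfolding latin_square_def using bij_betw_apply by fastforce

lemma latin_comp: "latin_square n L \<Longrightarrow> bij_betw \<sigma> {1..n} {1..n} \<Longrightarrow> latin_square n (\<lambda>a b. \<sigma> (L a b))"
  unfolding latin_square_def
  using bij_betw_trans[of _ "{0..<n}" "{1..n}" \<sigma> "{1..n}"] by (auto simp: comp_def)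

abbreviation dval where "dval n L \<equiv> (\<lambda>((i, j), (i', j')). sym_dist n (L i j) (L i' j'))"

lemma id_ge: "((i,j),(i',j')) \<in> adjacent_pairs n \<Longrightarrow> inner_distance n L \<le> sym_dist n (L i j) (L i' j')"
proof -
  assume "((i,j),(i',j')) \<in> adjacent_pairs n"
  then have "dval n L ((i,j),(i',j')) \<in> dval n L ` adjacent_pairs n" by (rule imageI)
  then have "Min (dval n L ` adjacent_pairs n) \<le> dval n L ((i,j),(i',j'))"
    by (rule Min_le[OF finite_imageI[OF adj_finite]])
  then show ?thesis unfolding inner_distance_def by simp
qed

lemma id_att: "n \<ge> 2 \<Longrightarrow> \<exists>i j i' j'. ((i,j),(i',j')) \<in> adjacent_pairs n \<and> sym_dist n (L i j) (L i' j') = inner_distance n L"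
proof -
  assume n: "n \<ge> 2"
  have "inner_distance n L \<in> dval n L ` adjacent_pairs n"
    unfolding inner_distance_def
    using Min_in[OF finite_imageI[OF adj_finite]] adj_ne[OF n] by blast
  then obtain p where "p \<in> adjacent_pairs n" "inner_distance n L = dval n L p" by blast
  then show ?thesis by (cases p) auto
qed

lemma id_eqI:
  assumes "\<And>i j i' j'. ((i,j),(i',j')) \<in> adjacent_pairs n \<Longrightarrow> k \<le> sym_dist n (L i j) (L i' j')"
    and "((i0,j0),(i1,j1)) \<in> adjacent_pairs n" and "sym_dist n (L i0 j0) (L i1 j1) = k"
  shows "inner_distance n L = k"
  unfolding inner_distance_def
proof (rule Min_eqI[OF finite_imageI[OF adj_finite]])
  fix y assume "y \<in> dval n L ` adjacent_pairs n"
  then obtain p where "p \<in> adjacent_pairs n" "y = dval n L p" by blast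
  then show "k \<le> y" using assms(1) by (cases p) auto
next
  show "k \<in> dval n L ` adjacent_pairs n" using assms(2,3) by force
qed

lemma sym_dist_1k: assumes "2 \<le> k" "2 * k \<le> n" shows "sym_dist n 1 k = k - 1"
proof -
  have "(1 - int k) mod int n = (1 - int k + int n) mod int n" by simp
  also have "\<dots> = 1 - int k + int n" using assms by (intro mod_pos_pos_trivial) auto
  finally have 1: "(1 - int k) mod int n = 1 - int k + int n" .
  have 2: "(int k - 1) mod int n = int k - 1" using assms by (intro mod_pos_pos_trivial) auto
  show ?thesis unfolding sym_dist_def using 1 2 assms by auto
qed

lemma step:
  assumes n: "n \<ge> 2" and L: "latin_square n L" and k: "inner_distance n L = k" "2 \<le> k"
  shows "\<exists>\<sigma>. bij_betw \<sigma> {1..n} {1..n} \<and> inner_distance n (\<lambda>a b. \<sigma> (L a b)) = k - 1"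
proof -
  have n0: "n > 0" using n by simp
  obtain i0 j0 i1 j1 where p: "((i0,j0),(i1,j1)) \<in> adjacent_pairs n" and
    pk: "sym_dist n (L i0 j0) (L i1 j1) = k" using id_att[OF n, of L] k by auto
  define x where "x = L i0 j0"
  define y where "y = L i1 j1"
  have xy: "x \<in> {1..n}" "y \<in> {1..n}" using adj_mem[OF p] latin_val[OF L] unfolding x_def y_def by auto
  have sdk: "sd n (int x - int y) = int k" using pk sym_dist_sd[OF n0] sd_nonneg[OF n0] unfolding x_def y_def
    by (metis int_nat_eq)
  have k2: "2 * int k \<le> int n" using sd_le[OF n0] sdk by metis
  obtain a b where ab: "(a = x \<and> b = y) \<or> (a = y \<and> b = x)" and abk: "(int b - int a) mod int n = int k"
  proof (cases "(int x - int y) mod int n = int k")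
    case True then show ?thesis using that by blast
  next
    case False
    then have "int n - (int x - int y) mod int n = int k" using sdk unfolding sd_def by (auto simp: min_def split: if_splits)
    moreover have "(int x - int y) mod int n \<noteq> 0" using calculation k2 k by auto
    moreover have "(int y - int x) mod int n = (- (int x - int y)) mod int n" by simp
    ultimately have "(int y - int x) mod int n = int k" using zmod_zminus1_eq_if[of "int x - int y" "int n"] by simp
    then show ?thesis using that by blast
  qed
  have a: "a \<in> {1..n}" using ab xy by auto
  define s where "s = (\<lambda>x. nat ((int x - int a - 1) mod int n) + 1)"
  note sp = shift_props[OF n0 a s_def]
  define \<sigma> where "\<sigma> = tau n \<circ> s"
  have bij: "bij_betw \<sigma> {1..n} {1..n}" unfolding \<sigma>_def using sp(1) tau_props(1)[OF n] by (rule bij_betw_trans)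
  have "s a = n" unfolding s_def using n0 by (simp add: zmod_minus1 nat_diff_distrib)
  then have "\<sigma> a = 1" unfolding \<sigma>_def by (simp add: tau_def)
  moreover have "s b = k" using sp(4)[OF abk] k by simp
  then have "\<sigma> b = k" unfolding \<sigma>_def using k k2 by (simp add: tau_def)
  ultimately have "sym_dist n (\<sigma> x) (\<sigma> y) = k - 1"
    using ab sym_dist_1k[of k n] k k2 sym_dist_commute by auto
  then have att: "sym_dist n (\<sigma> (L i0 j0)) (\<sigma> (L i1 j1)) = k - 1" unfolding x_def y_def .
  have ge: "k - 1 \<le> sym_dist n (\<sigma> (L i j)) (\<sigma> (L i' j'))" if q: "((i,j),(i',j')) \<in> adjacent_pairs n" for i j i' j'
  proof -
    define u where "u = L i j"
    define v where "v = L i' j'"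
    have uv: "u \<in> {1..n}" "v \<in> {1..n}" using adj_mem[OF q] latin_val[OF L] unfolding u_def v_def by auto
    have "k \<le> sym_dist n u v" using id_ge[OF q, of L] k unfolding u_def v_def by simp
    moreover have sss: "sym_dist n (s u) (s v) = sym_dist n u v"
      using sym_dist_sd[OF n0] sd_mod[OF sp(2)] by simp
    moreover have "s u \<in> {1..n}" by (rule bij_betw_apply[OF sp(1) uv(1)])
    moreover have "s v \<in> {1..n}" by (rule bij_betw_apply[OF sp(1) uv(2)])
    ultimately have "sym_dist n (s u) (s v) \<le> sym_dist n (tau n (s u)) (tau n (s v)) + 1"
      using tau_props(2)[OF n, of "s u" "s v"] k by linarith
    then have "sym_dist n u v \<le> sym_dist n (tau n (s u)) (tau n (s v)) + 1"
      using sss by simp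
    then show ?thesis using \<open>k \<le> sym_dist n u v\<close> unfolding \<sigma>_def u_def v_def by simp
  qed
  show ?thesis using bij id_eqI[of n "k - 1" "\<lambda>a b. \<sigma> (L a b)", OF ge p att] by blast
qed



lemma add_mod_cancel_nat:
  "((a::nat) + b) mod n = (a + b') mod n \<Longrightarrow> b < n \<Longrightarrow> b' < n \<Longrightarrow> b = b'"
proof -
  assume h: "(a + b) mod n = (a + b') mod n" "b < n" "b' < n"
  have "(int a + int b) mod int n = (int a + int b') mod int n" using h(1) by (metis of_nat_add zmod_int)
  then have "int b mod int n = int b' mod int n" by (metis add_diff_cancel_left' mod_diff_cong)
  then show ?thesis using h by simp
qed

lemma bij_card: "inj_on f {0..<n} \<Longrightarrow> (\<And>x. x < n \<Longrightarrow> f x \<in> {1..n}) \<Longrightarrow> bij_betw f {0..<n} {1..n::nat}"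
proof -
  assume i: "inj_on f {0..<n}" and m: "\<And>x. x < n \<Longrightarrow> f x \<in> {1..n}"
  have s: "f ` {0..<n} \<subseteq> {1..n}" using m by auto
  have "card (f ` {0..<n}) = card {1..n}" using card_image[OF i] by simp
  then have "f ` {0..<n} = {1..n}" using card_subset_eq[OF _ s] by simp
  then show ?thesis using i unfolding bij_betw_def by blast
qed

lemma bij_ident: "bij_betw (\<lambda>x. x) A A" by (simp add: bij_betw_def)

lemma descend:
  assumes n: "n \<ge> 2" and j: "1 \<le> j"
  shows "latin_square n L \<Longrightarrow> inner_distance n L = j + d \<Longrightarrow>
     \<exists>\<sigma>. bij_betw \<sigma> {1..n} {1..n} \<and> inner_distance n (\<lambda>a b. \<sigma> (L a b)) = j"
proof (induction d arbitrary: L)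
  case 0
  then show ?case using bij_ident[of "{1..n}"] by (intro exI[of _ "\<lambda>x. x"]) simp
next
  case (Suc d)
  obtain \<sigma>1 where s1: "bij_betw \<sigma>1 {1..n} {1..n}" "inner_distance n (\<lambda>a b. \<sigma>1 (L a b)) = j + d"
    using step[OF n Suc.prems(1) Suc.prems(2)] j by auto
  have "latin_square n (\<lambda>a b. \<sigma>1 (L a b))" using latin_comp[OF Suc.prems(1) s1(1)] .
  from Suc.IH[OF this s1(2)] obtain \<sigma>2 where s2: "bij_betw \<sigma>2 {1..n} {1..n}"
    "inner_distance n (\<lambda>a b. \<sigma>2 (\<sigma>1 (L a b))) = j" by auto
  have b: "bij_betw (\<sigma>2 \<circ> \<sigma>1) {1..n} {1..n}" using s1(1) s2(1) by (rule bij_betw_trans)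
  show ?case
  proof (intro exI conjI)
    show "bij_betw (\<sigma>2 \<circ> \<sigma>1) {1..n} {1..n}" by (rule b)
    show "inner_distance n (\<lambda>a b. (\<sigma>2 \<circ> \<sigma>1) (L a b)) = j" using s2(2) by (simp add: comp_def)
  qed
qed

lemma part2:
  assumes "2 \<le> n" "latin_square n L" "inner_distance n L = k" "1 \<le> j" "j < k"
  shows "\<exists>\<sigma>. bij_betw \<sigma> {1..n} {1..n} \<and>
                  latin_square n (\<lambda>a b. \<sigma> (L a b)) \<and>
                  isotopic n L (\<lambda>a b. \<sigma> (L a b)) \<and>
                  inner_distance n (\<lambda>a b. \<sigma> (L a b)) = j"
proof -
  obtain \<sigma> where s: "bij_betw \<sigma> {1..n} {1..n}" "inner_distance n (\<lambda>a b. \<sigma> (L a b)) = j"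
    using descend[OF assms(1) assms(4) assms(2), of "k - j"] assms by auto
  have "isotopic n L (\<lambda>a b. \<sigma> (L a b))" unfolding isotopic_def
    by (rule exI[of _ \<sigma>], rule exI[of _ "\<lambda>x. x"], rule exI[of _ "\<lambda>x. x"]) (intro conjI s(1) bij_ident, simp)
  then show ?thesis using s latin_comp[OF assms(2) s(1)] by blast
qed

definition cc :: "nat \<Rightarrow> nat \<Rightarrow> nat" where
  "cc n j = j div 2 + (j mod 2) * ((n - 1) div 2 + 1)"

lemma cc_lt: "n \<ge> 3 \<Longrightarrow> j < n \<Longrightarrow> cc n j < n"
  unfolding cc_def by (cases "even j") (auto elim!: evenE oddE)

lemma cc_inj: "n \<ge> 3 \<Longrightarrow> inj_on (cc n) {0..<n}"
proof (rule inj_onI)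
  fix x y assume n: "n \<ge> 3" and x: "x \<in> {0..<n}" and y: "y \<in> {0..<n}" and e: "cc n x = cc n y"
  have px: "x mod 2 = 0 \<longleftrightarrow> cc n x \<le> (n - 1) div 2" using x unfolding cc_def
    by (cases "x mod 2 = 0") (auto simp: mod2_eq_if cc_def split: if_splits)
  have py: "y mod 2 = 0 \<longleftrightarrow> cc n y \<le> (n - 1) div 2" using y unfolding cc_def
    by (cases "y mod 2 = 0") (auto simp: mod2_eq_if cc_def split: if_splits)
  have "x mod 2 = y mod 2" using px py e by (metis mod2_eq_if)
  then have "x div 2 = y div 2" using e unfolding cc_def by simp
  then show "x = y" using \<open>x mod 2 = y mod 2\<close> by (metis div_mod_decomp)
qed

definition L0 :: "nat \<Rightarrow> nat \<Rightarrow> nat \<Rightarrow> nat" where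
  "L0 n i j = (cc n i + cc n j) mod n + 1"

lemma L0_line: assumes n: "n \<ge> 3" and i: "i < n"
  shows "bij_betw (\<lambda>j. (cc n i + cc n j) mod n + 1) {0..<n} {1..n}"
proof (rule bij_card)
  show "inj_on (\<lambda>j. (cc n i + cc n j) mod n + 1) {0..<n}"
  proof (rule inj_onI)
    fix x y assume x: "x \<in> {0..<n}" and y: "y \<in> {0..<n}"
      and e: "(cc n i + cc n x) mod n + 1 = (cc n i + cc n y) mod n + 1"
    have "cc n x = cc n y" using add_mod_cancel_nat[of "cc n i" "cc n x" n "cc n y"] e cc_lt[OF n] x y by auto
    then show "x = y" using cc_inj[OF n] x y by (auto dest: inj_onD)
  qed
  fix x assume "x < n"
  have "(cc n i + cc n x) mod n < n" using n by simp
  then show "(cc n i + cc n x) mod n + 1 \<in> {1..n}" by simp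
qed

lemma L0_latin: "n \<ge> 3 \<Longrightarrow> latin_square n (L0 n)"
  unfolding latin_square_def L0_def using L0_line by (auto simp: add.commute)

lemma L0_dist: assumes n: "n \<ge> 3"
  shows "sym_dist n (L0 n i j) (L0 n i' j') = nat (sd n ((int (cc n i) + int (cc n j)) - (int (cc n i') + int (cc n j'))))"
proof -
  have n0: "n > 0" using n by simp
  have e: "int (L0 n a b) = (int (cc n a) + int (cc n b)) mod int n + 1" for a b
    unfolding L0_def by (simp add: zmod_int)
  have "(int (L0 n i j) - int (L0 n i' j')) mod int n =
        ((int (cc n i) + int (cc n j)) mod int n - (int (cc n i') + int (cc n j')) mod int n) mod int n"
    by (simp add: e)
  also have "\<dots> = ((int (cc n i) + int (cc n j)) - (int (cc n i') + int (cc n j'))) mod int n"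
    by (rule mod_diff_eq)
  finally show ?thesis using sym_dist_sd[OF n0] sd_mod by metis
qed

lemma cc_step: assumes n: "n \<ge> 3" and t: "t + 1 < n"
  shows "int ((n - 1) div 2) \<le> sd n (int (cc n t) - int (cc n (Suc t)))"
proof -
  define m where "m = (n - 1) div 2"
  have m: "2 * m + 1 \<le> n" "n \<le> 2 * m + 2" "m \<ge> 1" using n unfolding m_def by auto
  show ?thesis
  proof (cases "even t")
    case True
    then obtain q where q: "t = 2 * q" by (auto elim: evenE)
    have "int (cc n t) - int (cc n (Suc t)) = - int (m + 1)" unfolding cc_def q m_def by simp
    then have "sd n (int (cc n t) - int (cc n (Suc t))) = sd n (int (m + 1))" using sd_neg by metis
    also have "\<dots> = min (int m + 1) (int n - int m - 1)" unfolding sd_def using m by simp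
    finally show ?thesis using m unfolding m_def[symmetric] by simp
  next
    case False
    then obtain q where q: "t = 2 * q + 1" by (auto elim: oddE)
    have "int (cc n t) - int (cc n (Suc t)) = int m" unfolding cc_def q m_def by simp
    then have "sd n (int (cc n t) - int (cc n (Suc t))) = min (int m) (int n - int m)" unfolding sd_def using m by simp
    then show ?thesis using m unfolding m_def[symmetric] by simp
  qed
qed

lemma cc_12: assumes n: "n \<ge> 3"
  shows "sd n (int (cc n 1) - int (cc n 2)) = int ((n - 1) div 2)"
proof -
  define m where "m = (n - 1) div 2"
  have m: "2 * m + 1 \<le> n" "n \<le> 2 * m + 2" "m \<ge> 1" using n unfolding m_def by auto
  have "int (cc n 1) - int (cc n 2) = int m" unfolding cc_def m_def by simp
  then have "sd n (int (cc n 1) - int (cc n 2)) = min (int m) (int n - int m)" unfolding sd_def using m by simp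
  then show ?thesis using m unfolding m_def[symmetric] by simp
qed

lemma L0_id: assumes n: "n \<ge> 3" shows "inner_distance n (L0 n) = (n - 1) div 2"
proof (rule id_eqI)
  fix i j i' j' assume p: "((i, j), i', j') \<in> adjacent_pairs n"
  then consider "i' = i" "j' = Suc j" "j + 1 < n" | "j' = j" "i' = Suc i" "i + 1 < n"
    unfolding adjacent_pairs_def by auto
  then show "(n - 1) div 2 \<le> sym_dist n (L0 n i j) (L0 n i' j')"
  proof cases
    case 1
    then show ?thesis using cc_step[OF n 1(3)] unfolding L0_dist[OF n] by simp
  next
    case 2
    then show ?thesis using cc_step[OF n 2(3)] unfolding L0_dist[OF n] by simp
  qed
next
  show "((0,1),(0,2)) \<in> adjacent_pairs n" using n unfolding adjacent_pairs_def by auto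
  show "sym_dist n (L0 n 0 1) (L0 n 0 2) = (n - 1) div 2"
    unfolding L0_dist[OF n] using cc_12[OF n] by simp
qed

theorem mainTheorem7:
  shows "(\<forall>n k::nat. 1 \<le> k \<and> k \<le> (n - 1) div 2 \<longrightarrow>
            (\<exists>L. latin_square n L \<and> inner_distance n L = k))
       \<and> (\<forall>n k L. 2 \<le> n \<and> latin_square n L \<and> inner_distance n L = k \<longrightarrow>
            (\<forall>j. 1 \<le> j \<and> j < k \<longrightarrow>
               (\<exists>\<sigma>. bij_betw \<sigma> {1..n} {1..n} \<and>
                  latin_square n (\<lambda>a b. \<sigma> (L a b)) \<and>
                  isotopic n L (\<lambda>a b. \<sigma> (L a b)) \<and>
                  inner_distance n (\<lambda>a b. \<sigma> (L a b)) = j)))"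
proof (intro conjI allI impI)
  fix n k :: nat assume h: "1 \<le> k \<and> k \<le> (n - 1) div 2"
  then have n: "n \<ge> 3" by linarith
  show "\<exists>L. latin_square n L \<and> inner_distance n L = k"
  proof (cases "k = (n - 1) div 2")
    case True then show ?thesis using L0_latin[OF n] L0_id[OF n] by blast
  next
    case False
    then obtain \<sigma> where "bij_betw \<sigma> {1..n} {1..n}" "latin_square n (\<lambda>a b. \<sigma> (L0 n a b))"
        "inner_distance n (\<lambda>a b. \<sigma> (L0 n a b)) = k"
      using part2[OF _ L0_latin[OF n] L0_id[OF n], of k] n h by auto
    then show ?thesis by blast
  qed
next
  fix n k L j assume "2 \<le> n \<and> latin_square n L \<and> inner_distance n L = k" "1 \<le> j \<and> j < k"
  then show "\<exists>\<sigma>. bij_betw \<sigma> {1..n} {1..n} \<and>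
                  latin_square n (\<lambda>a b. \<sigma> (L a b)) \<and>
                  isotopic n L (\<lambda>a b. \<sigma> (L a b)) \<and>
                  inner_distance n (\<lambda>a b. \<sigma> (L a b)) = j"
    using part2 by blast
qed

end
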